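(* Let $f$ be a homeomorphism of a compact metric space $X$. If $f$ is positively finite-expansive and has the shadowing property, then $X$ is finite.
   Context: $f$ is positively finite-expansive if there is $c>0$ such that $W^s_c(x)=\{y\in X: d(f^n(x),f^n(y))\le c\ \forall n\ge 0\}$ is finite for every $x\in X$. Shadowing: for every $\varepsilon>0$ there is $\delta>0$ such that for every sequence $(x_k)_{k\in\mathbb{Z}}$ with $d(f(x_k),x_{k+1})<\delta$ for all $k$ there is $y$ with $d(f^k(y),x_k)<\varepsilon$ for all $k\in\mathbb{Z}$. *)

theory Defs
  imports "HOL-Analysis.Analysis"
begin

definition ziter :: "'a set \<Rightarrow> ('a \<Rightarrow> 'a) \<Rightarrow> int \<Rightarrow> 'a \<Rightarrow> 'a" where
  "ziter X f k = (if 0 \<le> k then f ^^ nat k else (inv_into X f) ^^ nat (- k))"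

definition local_stable_set :: "'a::metric_space set \<Rightarrow> ('a \<Rightarrow> 'a) \<Rightarrow> real \<Rightarrow> 'a \<Rightarrow> 'a set" where
  "local_stable_set X f c x = {y \<in> X. \<forall>n::nat. dist ((f ^^ n) x) ((f ^^ n) y) \<le> c}"

definition pos_finite_expansive :: "'a::metric_space set \<Rightarrow> ('a \<Rightarrow> 'a) \<Rightarrow> bool" where
  "pos_finite_expansive X f \<longleftrightarrow>
     (\<exists>c>0. \<forall>x\<in>X. finite (local_stable_set X f c x))"

definition has_shadowing :: "'a::metric_space set \<Rightarrow> ('a \<Rightarrow> 'a) \<Rightarrow> bool" where
  "has_shadowing X f \<longleftrightarrow>
     (\<forall>\<epsilon>>0. \<exists>\<delta>>0. \<forall>xs :: int \<Rightarrow> 'a.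
        (\<forall>k. xs k \<in> X) \<longrightarrow> (\<forall>k. dist (f (xs k)) (xs (k + 1)) < \<delta>) \<longrightarrow>
        (\<exists>y\<in>X. \<forall>k. dist (ziter X f k y) (xs k) < \<epsilon>))"

end

theory Submission
  imports Defs
begin

lemma iter_in: assumes "f ` X \<subseteq> X" "x \<in> X" shows "(f^^n) x \<in> X"
  using assms by (induction n) auto

lemma g_f_iter:
  assumes "\<And>x. x \<in> X \<Longrightarrow> g (f x) = x" "f ` X \<subseteq> X" "p \<in> X"
  shows "(g^^m) ((f^^(m+n)) p) = (f^^n) p"
proof (induction m)
  case 0 then show ?case by simp
next
  case (Suc m)
  have "(f^^(m+n)) p \<in> X" by (rule iter_in[OF assms(2,3)])
  then have e: "g ((f^^(Suc m+n)) p) = (f^^(m+n)) p" using assms(1) by simp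
  have "(g^^Suc m) ((f^^(Suc m+n)) p) = (g^^m) (g ((f^^(Suc m+n)) p))"
    by (simp only: funpow_Suc_right o_apply)
  then show ?case using Suc e by simp
qed

lemma stable_sym:
  "p \<in> X \<Longrightarrow> q \<in> X \<Longrightarrow> q \<in> local_stable_set X f c p \<longleftrightarrow> p \<in> local_stable_set X f c q"
  by (auto simp: local_stable_set_def dist_commute)

theorem theoremF:
  fixes X :: "'a::metric_space set" and f :: "'a \<Rightarrow> 'a"
  assumes "compact X"
    and "\<exists>g. homeomorphism X X f g"
    and "pos_finite_expansive X f"
    and "has_shadowing X f"
  shows "finite X"
proof (rule ccontr)
  assume inf: "infinite X"
  obtain g0 where hom: "homeomorphism X X f g0" using assms(2) by blast
  have fX: "f ` X = X" and g0f: "\<forall>x\<in>X. g0 (f x) = x" using hom by (auto simp: homeomorphism_def)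
  have inj: "inj_on f X" using g0f by (metis inj_on_inverseI)
  define g where "g = inv_into X f"
  have gX: "\<And>y. y\<in>X \<Longrightarrow> g y \<in> X" unfolding g_def using fX by (metis inv_into_into)
  have fg: "\<And>y. y \<in> X \<Longrightarrow> f (g y) = y" unfolding g_def using fX by (metis f_inv_into_f)
  have gf: "\<And>x. x\<in>X \<Longrightarrow> g (f x) = x" unfolding g_def using inj by (metis inv_into_f_f)
  have fX': "f ` X \<subseteq> X" using fX by simp
  have gX': "g ` X \<subseteq> X" using gX by blast
  obtain c where c: "c>0" "\<forall>x\<in>X. finite (local_stable_set X f c x)"
    using assms(3) unfolding pos_finite_expansive_def by blast
  have c4: "c/4 > 0" using c by simp
  obtain \<delta> where dpos: "\<delta>>0" and sh: "\<forall>xs :: int \<Rightarrow> 'a.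
        (\<forall>k. xs k \<in> X) \<longrightarrow> (\<forall>k. dist (f (xs k)) (xs (k + 1)) < \<delta>) \<longrightarrow>
        (\<exists>y\<in>X. \<forall>k. dist (ziter X f k y) (xs k) < c/4)"
    using assms(4)[unfolded has_shadowing_def, rule_format, OF c4] by blast
  define d where "d = min \<delta> (c/4)"
  have dpos': "d > 0" using dpos c by (simp add: d_def)
  define U where "U z = {y\<in>X. \<forall>n. dist ((g^^n) y) ((g^^n) z) \<le> c/2}" for z
  have key: "\<exists>z\<in>local_stable_set X f c x. y \<in> U z"
    if x: "x\<in>X" and y: "y\<in>X" and xy: "dist x y < d" for x y
  proof -
    define xs where "xs k = (if k < 0 then (g^^nat(-k)) y else (f^^nat k) x)" for k :: int
    have xsX: "\<forall>k. xs k \<in> X" using iter_in gX' fX' x y by (auto simp: xs_def)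
    have step: "\<forall>k. dist (f (xs k)) (xs (k+1)) < \<delta>"
    proof
      fix k :: int
      consider "k < -1" | "k = -1" | "k \<ge> 0" by linarith
      then show "dist (f (xs k)) (xs (k+1)) < \<delta>"
      proof cases
        case 1
        define m where "m = nat (-(k+1))"
        have m: "nat (-k) = Suc m" using 1 by (simp add: m_def)
        have "xs k = g ((g^^m) y)" using 1 m by (simp add: xs_def)
        moreover have "xs (k+1) = (g^^m) y" using 1 by (simp add: xs_def m_def)
        moreover have "(g^^m) y \<in> X" by (rule iter_in[OF gX' y])
        ultimately show ?thesis using fg dpos by simp
      next
        case 2
        have "xs k = g y" "xs (k+1) = x" using 2 by (simp_all add: xs_def)
        then show ?thesis using fg y xy by (simp add: d_def dist_commute)
      next
        case 3
        have "xs k = (f^^nat k) x" "xs (k+1) = f ((f^^nat k) x)" using 3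
          by (simp_all add: xs_def nat_add_distrib)
        then show ?thesis using dpos by simp
      qed
    qed
    obtain z where z: "z \<in> X" "\<forall>k. dist (ziter X f k z) (xs k) < c/4"
      using sh xsX step by blast
    have fw: "dist ((f^^n) z) ((f^^n) x) < c/4" for n
      using z(2)[rule_format, of "int n"] by (simp add: ziter_def xs_def)
    have bw: "dist ((g^^n) z) ((g^^n) y) < c/4" if "n>0" for n
      using z(2)[rule_format, of "- int n"] that by (simp add: ziter_def xs_def g_def)
    have z0: "dist z y < c/2"
    proof -
      have "dist z x < c/4" using fw[of 0] by simp
      moreover have "dist x y < c/4" using xy by (simp add: d_def)
      ultimately show ?thesis using dist_triangle[of z y x] by linarith
    qed
    have "z \<in> local_stable_set X f c x"
    proof -
      have "dist ((f^^n) x) ((f^^n) z) \<le> c" for n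
        using fw[of n] c by (simp add: dist_commute)
      then show ?thesis unfolding local_stable_set_def using z(1) by blast
    qed
    moreover have "y \<in> U z"
      unfolding U_def
    proof (intro CollectI conjI allI)
      show "y \<in> X" by fact
      fix n :: nat
      show "dist ((g^^n) y) ((g^^n) z) \<le> c/2"
      proof (cases "n = 0")
        case True then show ?thesis using z0 by (simp add: dist_commute)
      next
        case False then show ?thesis using bw[of n] c by (simp add: dist_commute)
      qed
    qed
    ultimately show ?thesis by blast
  qed
  have "X \<subseteq> (\<Union>x\<in>X. ball x d)" using dpos' by auto
  then obtain T where T: "T \<subseteq> X" "finite T" "X \<subseteq> (\<Union>x\<in>T. ball x d)"
    using compactE_image[OF assms(1), of X "\<lambda>x. ball x d"] by blast
  define Z where "Z = (\<Union>x\<in>T. local_stable_set X f c x)"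
  have finZ: "finite Z" unfolding Z_def using T c by blast
  have cov: "\<exists>z\<in>Z. y \<in> U z" if yX: "y \<in> X" for y
  proof -
    obtain x where "x \<in> T" "dist x y < d" using T(3) yX by auto
    then show ?thesis using key[of x y] T(1) yX unfolding Z_def by blast
  qed
  define S where "S p = local_stable_set X f c p" for p
  have selfS: "p \<in> S p" if "p \<in> X" for p
    using that c by (simp add: S_def local_stable_set_def)
  have build: "\<exists>F. F \<subseteq> X \<and> finite F \<and> card F = m \<and> (\<forall>p\<in>F. \<forall>q\<in>F. p \<noteq> q \<longrightarrow> q \<notin> S p)" for m
  proof (induction m)
    case 0 show ?case by (rule exI[of _ "{}"]) simp
  next
    case (Suc m)
    then obtain F where F: "F \<subseteq> X" "finite F" "card F = m" "\<forall>p\<in>F. \<forall>q\<in>F. p \<noteq> q \<longrightarrow> q \<notin> S p"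
      by blast
    have "finite (\<Union>p\<in>F. S p)" using F c by (auto simp: S_def)
    then have "infinite (X - (\<Union>p\<in>F. S p))" using inf by (metis Diff_infinite_finite)
    then obtain q where q: "q \<in> X" "q \<notin> (\<Union>p\<in>F. S p)"
      by (metis Diff_iff finite.emptyI ex_in_conv)
    have qF: "q \<notin> F" using q selfS F(1) by blast
    show ?case
    proof (rule exI[of _ "insert q F"], intro conjI)
      show "insert q F \<subseteq> X" using F q by blast
      show "finite (insert q F)" using F by simp
      show "card (insert q F) = Suc m" using F qF by simp
      show "\<forall>p\<in>insert q F. \<forall>r\<in>insert q F. p \<noteq> r \<longrightarrow> r \<notin> S p"
        using F q stable_sym unfolding S_def by (metis (no_types, lifting) UN_I insert_iff subsetD)
    qed
  qed
  obtain F where F: "F \<subseteq> X" "finite F" "card F = Suc (card Z)"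
    "\<forall>p\<in>F. \<forall>q\<in>F. p \<noteq> q \<longrightarrow> q \<notin> S p"
    using build[of "Suc (card Z)"] by auto
  have sep: "\<exists>n. c < dist ((f^^n) p) ((f^^n) q)" if "p \<in> F" "q \<in> F" "p \<noteq> q" for p q
  proof -
    have "q \<notin> S p" "q \<in> X" using F that by auto
    then show ?thesis by (auto simp: S_def local_stable_set_def not_le)
  qed
  define nn where "nn p q = (SOME n. c < dist ((f^^n) p) ((f^^n) q))" for p q
  have nn: "c < dist ((f^^nn p q) p) ((f^^nn p q) q)" if "p \<in> F" "q \<in> F" "p \<noteq> q" for p q
    unfolding nn_def using sep[OF that] by (rule someI_ex)
  define N where "N = (\<Sum>pq\<in>F\<times>F. nn (fst pq) (snd pq))"
  have nnN: "nn p q \<le> N" if "p \<in> F" "q \<in> F" for p q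
  proof -
    have "(\<lambda>pq. nn (fst pq) (snd pq)) (p,q) \<le> N"
      unfolding N_def by (rule member_le_sum) (use that F(2) in auto)
    then show ?thesis by simp
  qed
  define h where "h p = (SOME z. z\<in>Z \<and> (f^^N) p \<in> U z)" for p
  have h: "h p \<in> Z \<and> (f^^N) p \<in> U (h p)" if "p \<in> F" for p
  proof -
    have "(f^^N) p \<in> X" using F(1) that by (intro iter_in[OF fX']) auto
    then show ?thesis unfolding h_def using cov by (metis (mono_tags, lifting) someI_ex)
  qed
  have "\<not> inj_on h F"
  proof
    assume "inj_on h F"
    moreover have "h ` F \<subseteq> Z" using h by blast
    ultimately have "card F \<le> card Z" using finZ by (rule card_inj_on_le)
    then show False using F(3) by simp
  qed
  then obtain p q where pq: "p \<in> F" "q \<in> F" "p \<noteq> q" "h p = h q"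
    unfolding inj_on_def by blast
  define n where "n = nn p q"
  define m where "m = N - n"
  have Nmn: "N = m + n" using nnN[OF pq(1,2)] by (simp add: m_def n_def)
  define z where "z = h p"
  have up: "(f^^N) p \<in> U z" and uq: "(f^^N) q \<in> U z" using h[OF pq(1)] h[OF pq(2)] pq(4) by (simp_all add: z_def)
  have a: "dist ((g^^m) ((f^^N) p)) ((g^^m) z) \<le> c/2" using up by (simp add: U_def)
  have b: "dist ((g^^m) ((f^^N) q)) ((g^^m) z) \<le> c/2" using uq by (simp add: U_def)
  have "dist ((g^^m) ((f^^N) p)) ((g^^m) ((f^^N) q)) \<le> c"
    using a b dist_triangle3[of "(g^^m) ((f^^N) p)" "(g^^m) ((f^^N) q)" "(g^^m) z"]
    by (simp add: dist_commute)
  moreover have "(g^^m) ((f^^N) p) = (f^^n) p" "(g^^m) ((f^^N) q) = (f^^n) q"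
    using g_f_iter[of X g f, OF gf fX'] F(1) pq Nmn by auto
  ultimately have "dist ((f^^n) p) ((f^^n) q) \<le> c" by simp
  moreover have "c < dist ((f^^n) p) ((f^^n) q)" using nn pq by (simp add: n_def)
  ultimately show False by simp
qed

end
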